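(* Let $m\ge 3$ and let $X$ be a finite connected $2$-connected graph such that the number $N_e$ of maximal spanning trees of $X$ not containing the edge $e$ equals a constant $N$ independent of $e$. Let $\widetilde{X}$ be its $\mathbb{Z}_m$-homology cover with graph metric $d$, and let $d_Q$ be as defined below. Then for all $x,y\in\widetilde{X}$, $$d_Q(x,y)<\mathrm{girth}(X)\iff d(x,y)<\mathrm{girth}(X),$$ and if these inequalities hold then $d_Q(x,y)=d(x,y)$.
   Context: A graph is $2$-connected if removing any single edge leaves it connected; girth is the length of a shortest cycle. $\mathbb{Z}_m$-homology cover: fix orientations of the edges of $X$; for a maximal spanning tree $T$ with complementary edges $e_1,\dots,e_r$ (a free basis of $\pi_1(X)$), let $\rho:\pi_1(X)\to K=\pi_1(X)/[\pi_1(X),\pi_1(X)]\pi_1(X)^m\cong\oplus^r\mathbb{Z}_m$; $\widetilde{X}$ has vertices $V(X)\times K$, edges $E(X)\times K$, where for $e$ from $v$ to $w$ the edge $(e,k)$ joins $(v,k)$ to $(w,k)$ if $e\in T$ and to $(w,\rho(e)k)$ if $e\notin T$ (independent of $T$ up to isomorphism over $X$); $\pi:\widetilde{X}\to X$ is the projection. For a maximal tree $T$, the clouds are the sets $V(X)\times\{k\}$, $k\in K$; $C^T_x$ denotes the cloud containing $x$, and clouds are identified with elements of $\oplus^r\mathbb{Z}_m$; $d_T$ is the word metric on $\oplus^r\mathbb{Z}_m$ with respect to the generators $\rho(e_1),\dots,\rho(e_r)$ (one generator per factor). The metric $d_Q$: for $x,y\in\widetilde{X}$ choose a $d$-geodesic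 $\gamma$ from $x$ to $y$, and for an edge $e$ of $X$ let $\phi(e,x,y)\in\{0,\dots,m-1\}$ be the residue mod $m$ of $\big||\pi^{-1}(e)\cap\gamma|-|\pi^{-1}(e^{-1})\cap\gamma|\big|$, where these count the traversals by $\gamma$ of lifts of $e$ in the positive, respectively negative, direction. Then $d_Q(x,y)=\sum_{e\in E(X)}\sum_{T:\,e\notin T}\frac{1}{N_e}\min\{\phi(e,x,y),m-\phi(e,x,y)\}$, the inner sum over maximal spanning trees not containing $e$. When $N_e=N$ for all $e$ one has $d_Q(x,y)=\frac1N\sum_T d_T(C^T_x,C^T_y)$, summing over all maximal spanning trees $T$. *)

theory Defs
  imports "HOL-Library.Extended_Real"
begin

text \<open>Finite (multi)graphs with oriented edges: a vertex set V, an edge set E and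
  maps src, tgt giving the initial and terminal vertex of each edge (loops and
  parallel edges allowed).  A dart is an edge together with a direction
  (True = traversed positively, from src e to tgt e).\<close>

definition dstart :: "('e \<Rightarrow> 'v) \<Rightarrow> ('e \<Rightarrow> 'v) \<Rightarrow> 'e \<times> bool \<Rightarrow> 'v" where
  "dstart src tgt d = (if snd d then src (fst d) else tgt (fst d))"

definition dend :: "('e \<Rightarrow> 'v) \<Rightarrow> ('e \<Rightarrow> 'v) \<Rightarrow> 'e \<times> bool \<Rightarrow> 'v" where
  "dend src tgt d = (if snd d then tgt (fst d) else src (fst d))"

fun is_walk :: "('e \<Rightarrow> 'v) \<Rightarrow> ('e \<Rightarrow> 'v) \<Rightarrow> 'e set \<Rightarrow> 'v \<Rightarrow> ('e \<times> bool) list \<Rightarrow> 'v \<Rightarrow> bool" where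
  "is_walk src tgt F u [] v = (u = v)"
| "is_walk src tgt F u (d # ds) v =
     (fst d \<in> F \<and> dstart src tgt d = u \<and> is_walk src tgt F (dend src tgt d) ds v)"

definition connected_on :: "('e \<Rightarrow> 'v) \<Rightarrow> ('e \<Rightarrow> 'v) \<Rightarrow> 'v set \<Rightarrow> 'e set \<Rightarrow> bool" where
  "connected_on src tgt V F = (V \<noteq> {} \<and> (\<forall>u\<in>V. \<forall>v\<in>V. \<exists>ds. is_walk src tgt F u ds v))"

definition is_cycle :: "('e \<Rightarrow> 'v) \<Rightarrow> ('e \<Rightarrow> 'v) \<Rightarrow> 'e set \<Rightarrow> ('e \<times> bool) list \<Rightarrow> bool" where
  "is_cycle src tgt F ds = (ds \<noteq> [] \<and>
     is_walk src tgt F (dstart src tgt (List.hd ds)) ds (dstart src tgt (List.hd ds)) \<and>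
     distinct (map fst ds) \<and> distinct (map (dstart src tgt) ds))"

text \<open>Girth (\<infinity> if there is no cycle).\<close>
definition girth :: "('e \<Rightarrow> 'v) \<Rightarrow> ('e \<Rightarrow> 'v) \<Rightarrow> 'e set \<Rightarrow> ereal" where
  "girth src tgt E = (INF c \<in> {c. is_cycle src tgt E c}. ereal (real (length c)))"

definition is_graph :: "'v set \<Rightarrow> 'e set \<Rightarrow> ('e \<Rightarrow> 'v) \<Rightarrow> ('e \<Rightarrow> 'v) \<Rightarrow> bool" where
  "is_graph V E src tgt = (finite V \<and> finite E \<and> (\<forall>e\<in>E. src e \<in> V \<and> tgt e \<in> V))"

text \<open>2-connected in the sense of the paper: removing any single edge leaves it connected.\<close>
definition two_connected :: "'v set \<Rightarrow> 'e set \<Rightarrow> ('e \<Rightarrow> 'v) \<Rightarrow> ('e \<Rightarrow> 'v) \<Rightarrow> bool" where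
  "two_connected V E src tgt = (\<forall>e\<in>E. connected_on src tgt V (E - {e}))"

definition spanning_tree :: "'v set \<Rightarrow> 'e set \<Rightarrow> ('e \<Rightarrow> 'v) \<Rightarrow> ('e \<Rightarrow> 'v) \<Rightarrow> 'e set \<Rightarrow> bool" where
  "spanning_tree V E src tgt T = (T \<subseteq> E \<and> connected_on src tgt V T \<and> (\<nexists>c. is_cycle src tgt T c))"

definition N_edge :: "'v set \<Rightarrow> 'e set \<Rightarrow> ('e \<Rightarrow> 'v) \<Rightarrow> ('e \<Rightarrow> 'v) \<Rightarrow> 'e \<Rightarrow> nat" where
  "N_edge V E src tgt e = card {T. spanning_tree V E src tgt T \<and> e \<notin> T}"

text \<open>Z_m-homology cover built from a maximal spanning tree T0.
  The group K = (Z_m)^r, r = |E - T0|, is represented as the functions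
  E - T0 \<rightarrow> {0..<m}, extended by 0; rho e is the generator attached to e
  if e \<notin> T0 and 0 if e \<in> T0.\<close>
definition cloud_group :: "'e set \<Rightarrow> 'e set \<Rightarrow> nat \<Rightarrow> ('e \<Rightarrow> int) set" where
  "cloud_group E T0 m = {k. \<forall>e. (e \<in> E - T0 \<longrightarrow> 0 \<le> k e \<and> k e < int m) \<and> (e \<notin> E - T0 \<longrightarrow> k e = 0)}"

definition rho_act :: "'e set \<Rightarrow> nat \<Rightarrow> 'e \<Rightarrow> ('e \<Rightarrow> int) \<Rightarrow> ('e \<Rightarrow> int)" where
  "rho_act T0 m e k = (\<lambda>e'. (k e' + (if e' = e \<and> e \<notin> T0 then 1 else 0)) mod int m)"

definition cov_V :: "'v set \<Rightarrow> 'e set \<Rightarrow> 'e set \<Rightarrow> nat \<Rightarrow> ('v \<times> ('e \<Rightarrow> int)) set" where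
  "cov_V V E T0 m = V \<times> cloud_group E T0 m"

definition cov_E :: "'e set \<Rightarrow> 'e set \<Rightarrow> nat \<Rightarrow> ('e \<times> ('e \<Rightarrow> int)) set" where
  "cov_E E T0 m = E \<times> cloud_group E T0 m"

definition cov_src :: "('e \<Rightarrow> 'v) \<Rightarrow> 'e \<times> ('e \<Rightarrow> int) \<Rightarrow> 'v \<times> ('e \<Rightarrow> int)" where
  "cov_src src ek = (src (fst ek), snd ek)"

definition cov_tgt :: "('e \<Rightarrow> 'v) \<Rightarrow> 'e set \<Rightarrow> nat \<Rightarrow> 'e \<times> ('e \<Rightarrow> int) \<Rightarrow> 'v \<times> ('e \<Rightarrow> int)" where
  "cov_tgt tgt T0 m ek = (tgt (fst ek), rho_act T0 m (fst ek) (snd ek))"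

definition graph_dist :: "('e \<Rightarrow> 'v) \<Rightarrow> ('e \<Rightarrow> 'v) \<Rightarrow> 'e set \<Rightarrow> 'v \<Rightarrow> 'v \<Rightarrow> nat" where
  "graph_dist src tgt F u v = (LEAST n. \<exists>ds. is_walk src tgt F u ds v \<and> length ds = n)"

definition cov_dist :: "'e set \<Rightarrow> ('e \<Rightarrow> 'v) \<Rightarrow> ('e \<Rightarrow> 'v) \<Rightarrow> 'e set \<Rightarrow> nat
    \<Rightarrow> 'v \<times> ('e \<Rightarrow> int) \<Rightarrow> 'v \<times> ('e \<Rightarrow> int) \<Rightarrow> nat" where
  "cov_dist E src tgt T0 m x y = graph_dist (cov_src src) (cov_tgt tgt T0 m) (cov_E E T0 m) x y"

definition geodesic :: "'e set \<Rightarrow> ('e \<Rightarrow> 'v) \<Rightarrow> ('e \<Rightarrow> 'v) \<Rightarrow> 'e set \<Rightarrow> nat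
    \<Rightarrow> 'v \<times> ('e \<Rightarrow> int) \<Rightarrow> 'v \<times> ('e \<Rightarrow> int) \<Rightarrow> (('e \<times> ('e \<Rightarrow> int)) \<times> bool) list" where
  "geodesic E src tgt T0 m x y = (SOME ds.
      is_walk (cov_src src) (cov_tgt tgt T0 m) (cov_E E T0 m) x ds y \<and>
      length ds = cov_dist E src tgt T0 m x y)"

definition phi :: "'e set \<Rightarrow> ('e \<Rightarrow> 'v) \<Rightarrow> ('e \<Rightarrow> 'v) \<Rightarrow> 'e set \<Rightarrow> nat
    \<Rightarrow> 'e \<Rightarrow> 'v \<times> ('e \<Rightarrow> int) \<Rightarrow> 'v \<times> ('e \<Rightarrow> int) \<Rightarrow> nat" where
  "phi E src tgt T0 m e x y =
    (let \<gamma> = geodesic E src tgt T0 m x y;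
         pos = length (filter (\<lambda>d. fst (fst d) = e \<and> snd d) \<gamma>);
         neg = length (filter (\<lambda>d. fst (fst d) = e \<and> \<not> snd d) \<gamma>)
     in nat \<bar>int pos - int neg\<bar> mod m)"

definition dQ :: "'v set \<Rightarrow> 'e set \<Rightarrow> ('e \<Rightarrow> 'v) \<Rightarrow> ('e \<Rightarrow> 'v) \<Rightarrow> 'e set \<Rightarrow> nat
    \<Rightarrow> 'v \<times> ('e \<Rightarrow> int) \<Rightarrow> 'v \<times> ('e \<Rightarrow> int) \<Rightarrow> real" where
  "dQ V E src tgt T0 m x y =
     (\<Sum>e\<in>E. \<Sum>T\<in>{T. spanning_tree V E src tgt T \<and> e \<notin> T}.
        (1 / real (N_edge V E src tgt e)) *
        real (min (phi E src tgt T0 m e x y) (m - phi E src tgt T0 m e x y)))"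

end

theory Submission
  imports Defs
begin

definition pr :: "(('e \<times> 'k) \<times> bool) list \<Rightarrow> ('e \<times> bool) list" where
 "pr ds = map (\<lambda>d. (fst (fst d), snd d)) ds"

fun net :: "('e \<times> bool) list \<Rightarrow> 'e \<Rightarrow> int" where
  "net [] e = 0"
| "net (d # ds) e = (if fst d = e then (if snd d then 1 else -1) else 0) + net ds e"

definition bdy :: "'e set \<Rightarrow> ('e \<Rightarrow> 'v) \<Rightarrow> ('e \<Rightarrow> 'v) \<Rightarrow> ('e \<Rightarrow> int) \<Rightarrow> 'v \<Rightarrow> int" where
  "bdy E src tgt f v = (\<Sum>e\<in>E. (if src e = v then f e else 0) - (if tgt e = v then f e else 0))"

lemma walk_append:
  "is_walk src tgt F a (xs @ ys) b \<longleftrightarrow> (\<exists>c. is_walk src tgt F a xs c \<and> is_walk src tgt F c ys b)"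
  by (induction xs arbitrary: a) auto

lemma walk_mono: "is_walk src tgt F a xs b \<Longrightarrow> F \<subseteq> G \<Longrightarrow> is_walk src tgt G a xs b"
  by (induction xs arbitrary: a) auto

lemma walk_edges: "is_walk src tgt F a xs b \<Longrightarrow> fst ` set xs \<subseteq> F"
  by (induction xs arbitrary: a) auto

lemma dart_ends: "{dstart src tgt d, dend src tgt d} = {src (fst d), tgt (fst d)}"
  by (auto simp: dstart_def dend_def)

lemma walk_start_in: "is_walk src tgt F c xs b \<Longrightarrow> c \<in> set (map (dstart src tgt) xs) \<union> {b}"
  by (cases xs) auto

lemma walk_ends_dstart:
  "is_walk src tgt F a xs b \<Longrightarrow> d \<in> set xs \<Longrightarrow> dend src tgt d \<in> set (map (dstart src tgt) xs) \<union> {b}"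
proof (induction xs arbitrary: a)
  case Nil then show ?case by simp
next
  case (Cons d' xs)
  then show ?case using walk_start_in[of src tgt F "dend src tgt d'" xs b] by auto
qed

lemma walk_path:
  "is_walk src tgt F a w b \<Longrightarrow> \<exists>w'. is_walk src tgt F a w' b \<and> distinct (map (dstart src tgt) w' @ [b]) \<and> length w' \<le> length w"
proof (induction w arbitrary: a)
  case Nil then show ?case by auto
next
  case (Cons d w)
  then have d: "fst d \<in> F" "dstart src tgt d = a" and w: "is_walk src tgt F (dend src tgt d) w b" by auto
  from Cons.IH[OF w] obtain w'' where w'': "is_walk src tgt F (dend src tgt d) w'' b"
    "distinct (map (dstart src tgt) w'' @ [b])" "length w'' \<le> length w" by blast
  show ?case
  proof (cases "a \<in> set (map (dstart src tgt) w'' @ [b])")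
    case False
    then show ?thesis using w'' d by (intro exI[of _ "d # w''"]) auto
  next
    case True
    show ?thesis
    proof (cases "a = b")
      case True then show ?thesis by (intro exI[of _ "[]"]) auto
    next
      case False
      with True obtain d' where d': "d' \<in> set w''" "dstart src tgt d' = a" by auto
      then obtain u1 u2 where sp: "w'' = u1 @ d' # u2" by (meson split_list)
      with w''(1) obtain c where "is_walk src tgt F c (d' # u2) b" by (auto simp: walk_append)
      then have "is_walk src tgt F a (d' # u2) b" using d' by auto
      moreover have "distinct (map (dstart src tgt) (d' # u2) @ [b])" using w''(2) sp by auto
      moreover have "length (d' # u2) \<le> length (d # w)" using sp w''(3) by auto
      ultimately show ?thesis by blast
    qed
  qed
qed

lemma path_distinct_edges:
  "is_walk src tgt F a w b \<Longrightarrow> distinct (map (dstart src tgt) w @ [b]) \<Longrightarrow> distinct (map fst w)"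
proof (induction w arbitrary: a)
  case Nil then show ?case by simp
next
  case (Cons d w)
  then have d: "dstart src tgt d = a" and w: "is_walk src tgt F (dend src tgt d) w b" by auto
  have dist: "distinct (map (dstart src tgt) w @ [b])" "a \<notin> set (map (dstart src tgt) w @ [b])"
    using Cons.prems(2) d by auto
  have "fst d \<notin> fst ` set w"
  proof
    assume "fst d \<in> fst ` set w"
    then obtain d' where d': "d' \<in> set w" "fst d' = fst d" by auto
    have e: "{dstart src tgt d', dend src tgt d'} = {a, dend src tgt d}"
      using dart_ends[of src tgt d'] dart_ends[of src tgt d] d d'(2) by metis
    have "dstart src tgt d' \<noteq> a" using dist(2) d'(1) by auto
    then have "dend src tgt d' = a" using e by (metis doubleton_eq_iff)
    moreover have "dend src tgt d' \<in> set (map (dstart src tgt) w) \<union> {b}"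
      using walk_ends_dstart[OF w d'(1)] .
    ultimately show False using dist(2) by auto
  qed
  then show ?case using Cons.IH[OF w dist(1)] by simp
qed

lemma path_end_last:
  "is_walk src tgt F a P w \<Longrightarrow> distinct (map (dstart src tgt) P @ [w]) \<Longrightarrow> d \<in> set P \<Longrightarrow> dend src tgt d = w \<Longrightarrow> d = last P"
proof (induction P arbitrary: a)
  case Nil then show ?case by simp
next
  case (Cons d0 P)
  then have w: "is_walk src tgt F (dend src tgt d0) P w" by auto
  show ?case
  proof (cases "P = []")
    case True then show ?thesis using Cons.prems by auto
  next
    case False
    have dP: "distinct (map (dstart src tgt) P @ [w])" using Cons.prems by auto
    show ?thesis
    proof (cases "d = d0")
      case True
      then have "dend src tgt d0 = w" using Cons.prems by simp
      moreover have "dend src tgt d0 \<in> set (map (dstart src tgt) P)"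
        using False w by (cases P) auto
      ultimately show ?thesis using dP by auto
    next
      case ne: False
      then have "d \<in> set P" using Cons.prems by simp
      then show ?thesis using Cons.IH[OF w dP] Cons.prems False by simp
    qed
  qed
qed

lemma net_append: "net (xs @ ys) e = net xs e + net ys e"
  by (induction xs) auto

lemma net_notin: "is_walk src tgt F a q b \<Longrightarrow> e \<notin> F \<Longrightarrow> net q e = 0"
  by (induction q arbitrary: a) auto

lemma net_replicate: "net (concat (replicate n c)) e = int n * net c e"
  by (induction n) (auto simp: net_append algebra_simps)

lemma walk_replicate: "is_walk src tgt F a c a \<Longrightarrow> is_walk src tgt F a (concat (replicate n c)) a"
  by (induction n) (auto simp: walk_append)


lemma bdy_add: "bdy E src tgt (\<lambda>e. f e + g e) v = bdy E src tgt f v + bdy E src tgt g v"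
  unfolding bdy_def by (simp add: sum.distrib[symmetric]) (rule sum.cong, auto)

lemma bdy_diff: "bdy E src tgt (\<lambda>e. f e - g e) v = bdy E src tgt f v - bdy E src tgt g v"
  unfolding bdy_def by (simp add: sum_subtractf[symmetric]) (rule sum.cong, auto)

lemma bdy_single:
  assumes "finite E" "fst d \<in> E"
  shows "bdy E src tgt (\<lambda>e. if fst d = e then (if snd d then 1 else -1) else 0) v
     = (if dstart src tgt d = v then 1 else 0) - (if dend src tgt d = v then 1 else 0)"
proof -
  have "bdy E src tgt (\<lambda>e. if fst d = e then (if snd d then 1 else -1) else 0) v =
     (\<Sum>e\<in>E. if e = fst d then ((if src e = v then (if snd d then 1 else -1) else 0) - (if tgt e = v then (if snd d then 1 else -1) else 0)) else 0)"
    unfolding bdy_def by (rule sum.cong) auto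
  also have "\<dots> = (if src (fst d) = v then (if snd d then 1 else -1) else 0) - (if tgt (fst d) = v then (if snd d then 1 else -1) else 0)"
    using assms by (simp add: sum.delta)
  finally show ?thesis by (auto simp: dstart_def dend_def)
qed

lemma bdy_net:
  assumes "finite E" "F \<subseteq> E"
  shows "is_walk src tgt F a q b \<Longrightarrow> bdy E src tgt (net q) v = (if v = a then 1 else 0) - (if v = b then 1 else 0)"
proof (induction q arbitrary: a)
  case Nil then show ?case by (simp add: bdy_def)
next
  case (Cons d q)
  then have d: "fst d \<in> E" "dstart src tgt d = a" and w: "is_walk src tgt F (dend src tgt d) q b"
    using assms by auto
  have "net (d # q) = (\<lambda>e. (if fst d = e then (if snd d then 1 else -1) else 0) + net q e)"
    by auto
  then have "bdy E src tgt (net (d # q)) v = bdy E src tgt (\<lambda>e. if fst d = e then (if snd d then 1 else -1) else 0) v + bdy E src tgt (net q) v"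
    by (simp add: bdy_add)
  also have "\<dots> = ((if dstart src tgt d = v then 1 else 0) - (if dend src tgt d = v then 1 else 0)) + ((if v = dend src tgt d then 1 else 0) - (if v = b then 1 else 0))"
    by (simp only: bdy_single[OF assms(1) d(1), of src tgt v] Cons.IH[OF w])
  also have "\<dots> = (if v = a then 1 else 0) - (if v = b then 1 else 0)"
    using d(2) by auto
  finally show ?case .
qed

lemma sum_abs_net:
  assumes "finite E" "F \<subseteq> E"
  shows "is_walk src tgt F a q b \<Longrightarrow> (\<Sum>e\<in>E. \<bar>net q e\<bar>) \<le> int (length q)"
proof (induction q arbitrary: a)
  case Nil then show ?case by simp
next
  case (Cons d q)
  then have d: "fst d \<in> E" and w: "is_walk src tgt F (dend src tgt d) q b"
    using assms by auto
  have "(\<Sum>e\<in>E. \<bar>net (d # q) e\<bar>) \<le> (\<Sum>e\<in>E. (if e = fst d then 1 else 0) + \<bar>net q e\<bar>)"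
    by (rule sum_mono) auto
  also have "\<dots> = 1 + (\<Sum>e\<in>E. \<bar>net q e\<bar>)"
    using d assms(1) by (simp add: sum.distrib sum.delta)
  also have "\<dots> \<le> int (length (d # q))" using Cons.IH[OF w] by simp
  finally show ?case .
qed

lemma bdy_leaf:
  assumes "finite E" "el \<in> E" "\<forall>e\<in>E-{el}. (src e = w \<or> tgt e = w) \<longrightarrow> int m dvd g e"
  shows "int m dvd bdy E src tgt g w \<longleftrightarrow> int m dvd ((if src el = w then g el else 0) - (if tgt el = w then g el else 0))"
proof -
  let ?t = "\<lambda>e. (if src e = w then g e else 0) - (if tgt e = w then g e else 0)"
  have "bdy E src tgt g w = ?t el + (\<Sum>e\<in>E-{el}. ?t e)"
    unfolding bdy_def using assms(1,2) by (simp add: sum.remove)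
  moreover have "int m dvd (\<Sum>e\<in>E-{el}. ?t e)"
    by (rule dvd_sum) (use assms(3) in auto)
  ultimately show ?thesis by (simp add: dvd_add_left_iff)
qed


lemma cycle_mono: "is_cycle src tgt S c \<Longrightarrow> S \<subseteq> E \<Longrightarrow> is_cycle src tgt E c"
  unfolding is_cycle_def using walk_mono by metis

lemma walk_verts_in:
  "is_walk src tgt F a P w \<Longrightarrow> \<forall>e\<in>F. src e \<in> V \<and> tgt e \<in> V \<Longrightarrow> a \<in> V \<Longrightarrow> set (map (dstart src tgt) P @ [w]) \<subseteq> V"
proof (induction P arbitrary: a)
  case Nil then show ?case by simp
next
  case (Cons d P)
  then have "dend src tgt d \<in> V" by (auto simp: dend_def)
  then show ?case using Cons by auto
qed

lemma max_path:
  assumes fin: "finite V" and ends: "\<forall>e\<in>S. src e \<in> V \<and> tgt e \<in> V" and aV: "a \<in> V"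
    and acyc: "\<nexists>c. is_cycle src tgt S c"
    and P0: "is_walk src tgt S a P0 w0" "P0 \<noteq> []" "distinct (map (dstart src tgt) P0 @ [w0])"
  shows "\<exists>P w. is_walk src tgt S a P w \<and> P \<noteq> [] \<and> distinct (map (dstart src tgt) P @ [w]) \<and>
     (\<forall>e\<in>S. (src e = w \<or> tgt e = w) \<longrightarrow> e = fst (last P))"
proof -
  define L where "L = {n. \<exists>P w. is_walk src tgt S a P w \<and> P \<noteq> [] \<and> distinct (map (dstart src tgt) P @ [w]) \<and> length P = n}"
  have bound: "n \<le> card V" if "n \<in> L" for n
  proof -
    from that obtain P w where P: "is_walk src tgt S a P w" "distinct (map (dstart src tgt) P @ [w])" "length P = n"
      unfolding L_def by blast
    have "length (map (dstart src tgt) P @ [w]) = card (set (map (dstart src tgt) P @ [w]))"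
      using P(2) by (simp only: distinct_card)
    also have "\<dots> \<le> card V" using walk_verts_in[OF P(1) ends aV] fin by (intro card_mono)
    finally show ?thesis using P(3) by simp
  qed
  have finL: "finite L" using bound by (meson finite_nat_set_iff_bounded_le)
  have "length P0 \<in> L" unfolding L_def using P0 by blast
  then have "L \<noteq> {}" by auto
  then have "Max L \<in> L" using finL by simp
  then obtain P w where P: "is_walk src tgt S a P w" "P \<noteq> []" "distinct (map (dstart src tgt) P @ [w])"
      "length P = Max L" unfolding L_def by blast
  have leaf: "e = fst (last P)" if e: "e \<in> S" "src e = w \<or> tgt e = w" for e
  proof (rule ccontr)
    assume ne: "e \<noteq> fst (last P)"
    define \<delta> where "\<delta> = (if src e = w then (e, True) else (e, False))"
    define u where "u = dend src tgt \<delta>"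
    have \<delta>: "fst \<delta> = e" "dstart src tgt \<delta> = w" using e by (auto simp: \<delta>_def dstart_def)
    have w\<delta>: "is_walk src tgt S w [\<delta>] u" using \<delta> e(1) by (simp add: u_def)
    show False
    proof (cases "u \<in> set (map (dstart src tgt) P @ [w])")
      case False
      have "is_walk src tgt S a (P @ [\<delta>]) u" using P(1) w\<delta> by (auto simp: walk_append)
      moreover have "distinct (map (dstart src tgt) (P @ [\<delta>]) @ [u])" using P(3) False \<delta>(2) by auto
      ultimately have "length (P @ [\<delta>]) \<in> L" unfolding L_def by blast
      then have "length (P @ [\<delta>]) \<le> Max L" using finL by simp
      then show False using P(4) by simp
    next
      case True
      show False
      proof (cases "u = w")
        case True
        have "is_cycle src tgt S [\<delta>]" unfolding is_cycle_def using w\<delta> True \<delta>(2) by simp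
        then show False using acyc by blast
      next
        case False
        with True obtain d' where d': "d' \<in> set P" "dstart src tgt d' = u" by auto
        then obtain P1 P2' where sp: "P = P1 @ d' # P2'" by (meson split_list)
        define P2 where "P2 = d' # P2'"
        from P(1) sp obtain c where "is_walk src tgt S c P2 w" by (auto simp: walk_append P2_def)
        then have wP2: "is_walk src tgt S u P2 w" using d' by (auto simp: P2_def)
        have dP2: "distinct (map (dstart src tgt) P2 @ [w])" using P(3) sp by (auto simp: P2_def)
        have lastP2: "last P2 = last P" using sp by (simp add: P2_def)
        have eP2: "e \<notin> fst ` set P2"
        proof
          assume "e \<in> fst ` set P2"
          then obtain d'' where d'': "d'' \<in> set P2" "fst d'' = e" by auto
          have "w \<in> {dstart src tgt d'', dend src tgt d''}"
            using dart_ends[of src tgt d''] d''(2) e(2) by auto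
          moreover have "dstart src tgt d'' \<noteq> w" using dP2 d''(1) by auto
          ultimately have "dend src tgt d'' = w" by auto
          then have "d'' = last P2" using path_end_last[OF wP2 dP2 d''(1)] by simp
          then show False using ne d''(2) lastP2 by simp
        qed
        have "is_cycle src tgt S (P2 @ [\<delta>])"
          unfolding is_cycle_def
        proof (intro conjI)
          show "P2 @ [\<delta>] \<noteq> []" by simp
          have h: "hd (P2 @ [\<delta>]) = d'" by (simp add: P2_def)
          show "is_walk src tgt S (dstart src tgt (hd (P2 @ [\<delta>]))) (P2 @ [\<delta>]) (dstart src tgt (hd (P2 @ [\<delta>])))"
            unfolding h d'(2) using wP2 w\<delta> by (auto simp: walk_append)
          show "distinct (map fst (P2 @ [\<delta>]))"
            using path_distinct_edges[OF wP2 dP2] eP2 \<delta>(1) by auto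
          show "distinct (map (dstart src tgt) (P2 @ [\<delta>]))" using dP2 \<delta>(2) by simp
        qed
        then show False using acyc by blast
      qed
    qed
  qed
  show ?thesis using P leaf by blast
qed


lemma walk_last: "is_walk src tgt F a P w \<Longrightarrow> P \<noteq> [] \<Longrightarrow> dend src tgt (last P) = w"
  by (induction P arbitrary: a) auto

lemma leaf_contra:
  assumes fin: "finite E" and el: "el \<in> E" "src el \<noteq> tgt el" "src el = w \<or> tgt el = w"
    and nd: "\<not> int m dvd g el"
    and oth: "\<forall>e\<in>E-{el}. (src e = w \<or> tgt e = w) \<longrightarrow> int m dvd g e"
  shows "\<not> int m dvd bdy E src tgt g w"
proof -
  have "\<not> int m dvd ((if src el = w then g el else 0) - (if tgt el = w then g el else 0))"
    using el nd by auto
  then show ?thesis using bdy_leaf[OF fin el(1) oth] by simp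
qed

lemma forest_unique:
  assumes finV: "finite V" and finE: "finite E" and ends: "\<forall>e\<in>E. src e \<in> V \<and> tgt e \<in> V"
    and SE: "S \<subseteq> E" and acyc: "\<nexists>c. is_cycle src tgt S c"
    and off: "\<forall>e\<in>E-S. int m dvd g e" and bd: "\<forall>v. int m dvd bdy E src tgt g v"
  shows "\<forall>e\<in>E. int m dvd g e"
proof (rule ccontr)
  assume "\<not> (\<forall>e\<in>E. int m dvd g e)"
  then obtain e0 where e0: "e0 \<in> E" "\<not> int m dvd g e0" by blast
  define S' where "S' = {e\<in>S. \<not> int m dvd g e}"
  have e0S: "e0 \<in> S'" using e0 off by (auto simp: S'_def)
  have S'S: "S' \<subseteq> S" by (auto simp: S'_def)
  have acyc': "\<nexists>c. is_cycle src tgt S' c" using acyc cycle_mono[OF _ S'S] by blast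
  have noloop: "src e \<noteq> tgt e" if "e \<in> S'" for e
  proof
    assume "src e = tgt e"
    then have "is_cycle src tgt S' [(e, True)]" using that
      by (simp add: is_cycle_def dstart_def dend_def)
    then show False using acyc' by blast
  qed
  have ends': "\<forall>e\<in>S'. src e \<in> V \<and> tgt e \<in> V" using ends SE S'S by blast
  have w0: "is_walk src tgt S' (src e0) [(e0, True)] (tgt e0)" using e0S by (simp add: dstart_def dend_def)
  have d0: "distinct (map (dstart src tgt) [(e0, True)] @ [tgt e0])" using noloop[OF e0S] by (simp add: dstart_def)
  obtain P w where P: "is_walk src tgt S' (src e0) P w" "P \<noteq> []" "distinct (map (dstart src tgt) P @ [w])"
    and leaf: "\<forall>e\<in>S'. (src e = w \<or> tgt e = w) \<longrightarrow> e = fst (last P)"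
    using max_path[OF finV ends' _ acyc' w0 _ d0] ends e0 by auto
  define el where "el = fst (last P)"
  have elS: "el \<in> S'" using walk_edges[OF P(1)] P(2) by (auto simp: el_def)
  have wend: "dend src tgt (last P) = w" using walk_last[OF P(1,2)] .
  have inc: "src el = w \<or> tgt el = w" using dart_ends[of src tgt "last P"] wend unfolding el_def by (metis insertCI insert_iff singletonD)
  have "\<not> int m dvd bdy E src tgt g w"
  proof (rule leaf_contra[where E=E and el=el and src=src and tgt=tgt and w=w and m=m, OF finE _ noloop[OF elS] inc])
    show "el \<in> E" using elS S'S SE by auto
    show "\<not> int m dvd g el" using elS by (auto simp: S'_def)
    show "\<forall>e\<in>E-{el}. (src e = w \<or> tgt e = w) \<longrightarrow> int m dvd g e"
      using leaf off by (auto simp: S'_def el_def)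
  qed
  then show False using bd by blast
qed

lemma forest_exist:
  assumes finV: "finite V" and finE: "finite E" and ends: "\<forall>e\<in>E. src e \<in> V \<and> tgt e \<in> V"
    and aV: "a \<in> V" and m2: "m \<ge> 2"
    and Sdef: "S = {e\<in>E. \<not> int m dvd f e}" and acyc: "\<nexists>c. is_cycle src tgt S c"
    and bd: "\<forall>v. bdy E src tgt f v = (if v = a then 1 else 0) - (if v = b then 1 else 0)"
  shows "\<exists>q. is_walk src tgt S a q b \<and> distinct (map fst q) \<and> (\<forall>e\<in>E. int m dvd (net q e - f e))"
proof -
  have SE: "S \<subseteq> E" using Sdef by auto
  have off: "\<forall>e\<in>E-S. int m dvd f e" using Sdef by auto
  have nd1: "\<not> int m dvd 1" "\<not> int m dvd -1" using m2 by auto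
  have noloop: "src e \<noteq> tgt e" if "e \<in> S" for e
  proof
    assume "src e = tgt e"
    then have "is_cycle src tgt S [(e, True)]" using that
      by (simp add: is_cycle_def dstart_def dend_def)
    then show False using acyc by blast
  qed
  have ends': "\<forall>e\<in>S. src e \<in> V \<and> tgt e \<in> V" using ends SE by blast
  show ?thesis
  proof (cases "a = b")
    case True
    have "\<forall>e\<in>E. int m dvd f e"
      by (rule forest_unique[OF finV finE ends SE acyc off]) (use bd True in simp)
    then show ?thesis using True by (intro exI[of _ "[]"]) auto
  next
    case False
    have "\<not> int m dvd bdy E src tgt f a" using bd False nd1 by simp
    have "\<exists>e\<in>E. (src e = a \<or> tgt e = a) \<and> \<not> int m dvd f e"
    proof (rule ccontr)
      assume "\<not> ?thesis"
      then have "\<forall>e\<in>E. int m dvd ((if src e = a then f e else 0) - (if tgt e = a then f e else 0))" by auto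
      then have "int m dvd bdy E src tgt f a" unfolding bdy_def by (intro dvd_sum) auto
      with \<open>\<not> int m dvd bdy E src tgt f a\<close> show False by blast
    qed
    then obtain e1 where e1: "e1 \<in> S" "src e1 = a \<or> tgt e1 = a" using Sdef by auto
    define \<delta> where "\<delta> = (if src e1 = a then (e1, True) else (e1, False))"
    have \<delta>: "fst \<delta> = e1" "dstart src tgt \<delta> = a" using e1 by (auto simp: \<delta>_def dstart_def)
    have "dend src tgt \<delta> \<noteq> a" using noloop[OF e1(1)] e1(2) by (auto simp: \<delta>_def dend_def)
    then have d0: "distinct (map (dstart src tgt) [\<delta>] @ [dend src tgt \<delta>])" using \<delta> by simp
    have w0: "is_walk src tgt S a [\<delta>] (dend src tgt \<delta>)" using \<delta> e1 by simp
    obtain P w where P: "is_walk src tgt S a P w" "P \<noteq> []" "distinct (map (dstart src tgt) P @ [w])"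
      and leaf: "\<forall>e\<in>S. (src e = w \<or> tgt e = w) \<longrightarrow> e = fst (last P)"
      using max_path[OF finV ends' aV acyc w0 _ d0] by auto
    define el where "el = fst (last P)"
    have elS: "el \<in> S" using walk_edges[OF P(1)] P(2) by (auto simp: el_def)
    have wend: "dend src tgt (last P) = w" using walk_last[OF P(1,2)] .
    have inc: "src el = w \<or> tgt el = w" using dart_ends[of src tgt "last P"] wend unfolding el_def by (metis insertCI insert_iff singletonD)
    have "\<not> int m dvd bdy E src tgt f w"
    proof (rule leaf_contra[where E=E and el=el and src=src and tgt=tgt and w=w and m=m, OF finE _ noloop[OF elS] inc])
      show "el \<in> E" using elS SE by auto
      show "\<not> int m dvd f el" using elS Sdef by auto
      show "\<forall>e\<in>E-{el}. (src e = w \<or> tgt e = w) \<longrightarrow> int m dvd f e"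
        using leaf Sdef by (auto simp: el_def)
    qed
    moreover have "w \<noteq> a"
    proof
      assume "w = a"
      have "a \<in> set (map (dstart src tgt) P)" using P(1,2) by (cases P) auto
      then show False using P(3) \<open>w = a\<close> by auto
    qed
    ultimately have wb: "w = b" using bd by (cases "w = b") auto
    have Pb: "is_walk src tgt S a P b" using P(1) wb by simp
    have bdq: "bdy E src tgt (net P) v = (if v = a then 1 else 0) - (if v = b then 1 else 0)" for v
      using bdy_net[OF finE SE Pb] .
    have "\<forall>e\<in>E. int m dvd (f e - net P e)"
    proof (rule forest_unique[OF finV finE ends SE acyc])
      show "\<forall>e\<in>E - S. int m dvd f e - net P e" using off net_notin[OF Pb] by auto
      show "\<forall>v. int m dvd bdy E src tgt (\<lambda>e. f e - net P e) v"
        using bdy_diff[of E src tgt f "net P"] bd bdq by simp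
    qed
    then have "\<forall>e\<in>E. int m dvd (net P e - f e)" by (metis dvd_minus_iff minus_diff_eq)
    then show ?thesis using Pb path_distinct_edges[OF P(1,3)] by blast
  qed
qed


definition cl :: "'e set \<Rightarrow> nat \<Rightarrow> ('e \<Rightarrow> int) \<Rightarrow> ('e \<times> bool) list \<Rightarrow> 'e \<Rightarrow> int" where
  "cl T0 m k w = (\<lambda>e. (k e + (if e \<notin> T0 then net w e else 0)) mod int m)"

lemma cg_mod: "k \<in> cloud_group E T0 m \<Longrightarrow> m > 0 \<Longrightarrow> k e mod int m = k e"
  unfolding cloud_group_def by (cases "e \<in> E - T0") auto

lemma rho_cg: "k \<in> cloud_group E T0 m \<Longrightarrow> e \<in> E \<Longrightarrow> m > 0 \<Longrightarrow> rho_act T0 m e k \<in> cloud_group E T0 m"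
  unfolding cloud_group_def rho_act_def by auto

lemma cov_darts[simp]:
  "dstart (cov_src src) (cov_tgt tgt T0 m) ((e,k),True) = (src e, k)"
  "dend (cov_src src) (cov_tgt tgt T0 m) ((e,k),True) = (tgt e, rho_act T0 m e k)"
  "dstart (cov_src src) (cov_tgt tgt T0 m) ((e,k),False) = (tgt e, rho_act T0 m e k)"
  "dend (cov_src src) (cov_tgt tgt T0 m) ((e,k),False) = (src e, k)"
  by (auto simp: dstart_def dend_def cov_src_def cov_tgt_def)

lemma cl_fwd: "cl T0 m (rho_act T0 m e k) w = cl T0 m k ((e,True) # w)"
  unfolding cl_def rho_act_def
  apply (rule ext)
  apply (simp only: mod_add_left_eq)
  subgoal for e' by (cases "e' = e"; cases "e' \<in> T0") (simp_all add: algebra_simps)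
  done

lemma cl_bwd: "cl T0 m k0 w = cl T0 m (rho_act T0 m e k0) ((e,False) # w)"
  unfolding cl_def rho_act_def
  apply (rule ext)
  apply (simp only: mod_add_left_eq)
  subgoal for e' by (cases "e' = e"; cases "e' \<in> T0") (simp_all add: algebra_simps)
  done

lemma cover_proj:
  assumes "m > 0"
  shows "is_walk (cov_src src) (cov_tgt tgt T0 m) (cov_E E T0 m) (v, k) ds z \<Longrightarrow> k \<in> cloud_group E T0 m \<Longrightarrow>
    is_walk src tgt E v (pr ds) (fst z) \<and> snd z = cl T0 m k (pr ds)"
proof (induction ds arbitrary: v k)
  case Nil then show ?case using cg_mod[OF _ assms, of k E T0] by (auto simp: pr_def cl_def)
next
  case (Cons d ds)
  obtain e k0 b where d: "d = ((e, k0), b)" by (metis prod.collapse)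
  have ek: "e \<in> E" "k0 \<in> cloud_group E T0 m" using Cons.prems d by (auto simp: cov_E_def)
  show ?case
  proof (cases b)
    case True
    then have st: "v = src e" "k = k0" using Cons.prems d by auto
    have w: "is_walk (cov_src src) (cov_tgt tgt T0 m) (cov_E E T0 m) (tgt e, rho_act T0 m e k) ds z"
      using Cons.prems d True st by auto
    have IH: "is_walk src tgt E (tgt e) (pr ds) (fst z) \<and> snd z = cl T0 m (rho_act T0 m e k) (pr ds)"
      using Cons.IH[OF w rho_cg[OF Cons.prems(2) ek(1) assms]] .
    have "cl T0 m (rho_act T0 m e k) (pr ds) = cl T0 m k (pr (d # ds))"
      using d True cl_fwd[of T0 m e k "pr ds"] by (simp add: pr_def)
    then show ?thesis using IH d True st ek by (auto simp: pr_def dstart_def dend_def)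
  next
    case False
    then have st: "v = tgt e" "k = rho_act T0 m e k0" using Cons.prems d by auto
    have w: "is_walk (cov_src src) (cov_tgt tgt T0 m) (cov_E E T0 m) (src e, k0) ds z"
      using Cons.prems d False st by auto
    have IH: "is_walk src tgt E (src e) (pr ds) (fst z) \<and> snd z = cl T0 m k0 (pr ds)"
      using Cons.IH[OF w ek(2)] .
    have "cl T0 m k0 (pr ds) = cl T0 m k (pr (d # ds))"
      using d False cl_bwd[of T0 m k0 "pr ds" e] st by (simp add: pr_def)
    then show ?thesis using IH d False st ek by (auto simp: pr_def dstart_def dend_def)
  qed
qed

lemma cover_lift:
  assumes "m > 0"
  shows "is_walk src tgt E v w u \<Longrightarrow> k \<in> cloud_group E T0 m \<Longrightarrow>
    \<exists>ds z. is_walk (cov_src src) (cov_tgt tgt T0 m) (cov_E E T0 m) (v, k) ds z \<and> pr ds = w"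
proof (induction w arbitrary: v k)
  case Nil then show ?case by (intro exI[of _ "[]"]) (auto simp: pr_def)
next
  case (Cons d w)
  obtain e b where d: "d = (e, b)" by (metis prod.collapse)
  have e: "e \<in> E" using Cons.prems d by auto
  show ?case
  proof (cases b)
    case True
    have v: "v = src e" using Cons.prems d True by (auto simp: dstart_def)
    have w: "is_walk src tgt E (tgt e) w u" using Cons.prems d True by (auto simp: dend_def)
    obtain ds z where ds: "is_walk (cov_src src) (cov_tgt tgt T0 m) (cov_E E T0 m) (tgt e, rho_act T0 m e k) ds z" "pr ds = w"
      using Cons.IH[OF w rho_cg[OF Cons.prems(2) e assms]] by blast
    have "is_walk (cov_src src) (cov_tgt tgt T0 m) (cov_E E T0 m) (v, k) (((e, k), True) # ds) z"
      using ds v e Cons.prems(2) by (auto simp: cov_E_def)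
    moreover have "pr (((e, k), True) # ds) = d # w" using ds d True by (simp add: pr_def)
    ultimately show ?thesis by blast
  next
    case False
    have v: "v = tgt e" using Cons.prems d False by (auto simp: dstart_def)
    have w: "is_walk src tgt E (src e) w u" using Cons.prems d False by (auto simp: dend_def)
    define k0 where "k0 = (\<lambda>e'. (k e' - (if e' = e \<and> e \<notin> T0 then 1 else 0)) mod int m)"
    have k0: "k0 \<in> cloud_group E T0 m"
      using Cons.prems(2) e assms unfolding cloud_group_def k0_def by auto
    have rk: "rho_act T0 m e k0 = k"
      unfolding rho_act_def k0_def using cg_mod[OF Cons.prems(2) assms]
      by (auto simp: mod_add_left_eq)
    obtain ds z where ds: "is_walk (cov_src src) (cov_tgt tgt T0 m) (cov_E E T0 m) (src e, k0) ds z" "pr ds = w"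
      using Cons.IH[OF w k0] by blast
    have "is_walk (cov_src src) (cov_tgt tgt T0 m) (cov_E E T0 m) (v, k) (((e, k0), False) # ds) z"
      using ds v e k0 rk by (auto simp: cov_E_def)
    moreover have "pr (((e, k0), False) # ds) = d # w" using ds d False by (simp add: pr_def)
    ultimately show ?thesis by blast
  qed
qed


lemma walk_det: "is_walk src tgt F a w b \<Longrightarrow> is_walk src tgt F a w b' \<Longrightarrow> b = b'"
  by (induction w arbitrary: a) auto

lemma closed_walks:
  assumes "finite A" "A \<subseteq> E - T0" and conn: "connected_on src tgt V T0" and aV: "a \<in> V"
    and ends: "\<forall>e\<in>E. src e \<in> V \<and> tgt e \<in> V" and T0E: "T0 \<subseteq> E"
  shows "\<exists>W. is_walk src tgt E a W a \<and> (\<forall>e. e \<notin> T0 \<longrightarrow> net W e = (if e \<in> A then int (r e) else 0))"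
  using assms(1,2)
proof (induction A rule: finite_induct)
  case empty then show ?case by (intro exI[of _ "[]"]) auto
next
  case (insert e0 A)
  then obtain W where W: "is_walk src tgt E a W a" "\<forall>e. e \<notin> T0 \<longrightarrow> net W e = (if e \<in> A then int (r e) else 0)"
    by blast
  have e0: "e0 \<in> E" "e0 \<notin> T0" using insert by auto
  obtain P1 where P1: "is_walk src tgt T0 a P1 (src e0)" using conn aV ends e0 unfolding connected_on_def by blast
  obtain P2 where P2: "is_walk src tgt T0 (tgt e0) P2 a" using conn aV ends e0 unfolding connected_on_def by blast
  define c where "c = P1 @ (e0, True) # P2"
  have wc: "is_walk src tgt E a c a"
    using walk_mono[OF P1 T0E] walk_mono[OF P2 T0E] e0 unfolding c_def
    by (auto simp: walk_append dstart_def dend_def)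
  have nc: "net c e = (if e0 = e then 1 else 0)" if "e \<notin> T0" for e
    using net_notin[OF P1 that] net_notin[OF P2 that] unfolding c_def by (simp add: net_append)
  define W' where "W' = concat (replicate (r e0) c) @ W"
  have "is_walk src tgt E a W' a" using walk_replicate[OF wc] W(1) unfolding W'_def by (auto simp: walk_append)
  moreover have "\<forall>e. e \<notin> T0 \<longrightarrow> net W' e = (if e \<in> insert e0 A then int (r e) else 0)"
    using W(2) nc insert(2) unfolding W'_def by (auto simp: net_append net_replicate)
  ultimately show ?case by blast
qed

lemma cover_conn:
  assumes m: "m > 0" and finE: "finite E" and T0E: "T0 \<subseteq> E" and conn: "connected_on src tgt V T0"
    and ends: "\<forall>e\<in>E. src e \<in> V \<and> tgt e \<in> V" and aV: "a \<in> V" and bV: "b \<in> V"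
    and kx: "kx \<in> cloud_group E T0 m" and ky: "ky \<in> cloud_group E T0 m"
  shows "\<exists>ds. is_walk (cov_src src) (cov_tgt tgt T0 m) (cov_E E T0 m) (a, kx) ds (b, ky)"
proof -
  define r where "r = (\<lambda>e. nat ((ky e - kx e) mod int m))"
  obtain W where W: "is_walk src tgt E a W a" "\<forall>e. e \<notin> T0 \<longrightarrow> net W e = (if e \<in> E - T0 then int (r e) else 0)"
    using closed_walks[of "E - T0" E T0 src tgt V a r] finE conn aV ends T0E by auto
  obtain P where P: "is_walk src tgt T0 a P b" using conn aV bV unfolding connected_on_def by blast
  have W2: "is_walk src tgt E a (W @ P) b" using W(1) walk_mono[OF P T0E] by (auto simp: walk_append)
  obtain ds z where ds: "is_walk (cov_src src) (cov_tgt tgt T0 m) (cov_E E T0 m) (a, kx) ds z" "pr ds = W @ P"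
    using cover_lift[OF m W2 kx] by blast
  have pz: "is_walk src tgt E a (W @ P) (fst z)" "snd z = cl T0 m kx (W @ P)"
    using cover_proj[OF m ds(1) kx] ds(2) by auto
  have fz: "fst z = b" using walk_det[OF pz(1) W2] .
  have "cl T0 m kx (W @ P) = ky"
  proof (rule ext)
    fix e
    show "cl T0 m kx (W @ P) e = ky e"
    proof (cases "e \<in> T0")
      case True
      then show ?thesis using kx ky m T0E unfolding cl_def cloud_group_def by auto
    next
      case False
      then have nP: "net P e = 0" using net_notin[OF P] by simp
      show ?thesis
      proof (cases "e \<in> E")
        case True
        have "cl T0 m kx (W @ P) e = (kx e + (ky e - kx e) mod int m) mod int m"
          unfolding cl_def using False True W(2) nP m by (simp add: net_append r_def)
        also have "\<dots> = ky e mod int m" by (simp add: mod_add_right_eq)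
        also have "\<dots> = ky e" using cg_mod[OF ky m] .
        finally show ?thesis .
      next
        case nE: False
        then show ?thesis using kx ky W(2) nP False unfolding cl_def cloud_group_def by (simp add: net_append)
      qed
    qed
  qed
  then have "z = (b, ky)" using fz pz(2) by (metis prod.collapse)
  then show ?thesis using ds(1) by blast
qed


lemma girth_le: "is_cycle src tgt E c \<Longrightarrow> girth src tgt E \<le> ereal (real (length c))"
  unfolding girth_def by (rule INF_lower) simp

lemma key:
  assumes finV: "finite V" and finE: "finite E" and ends: "\<forall>e\<in>E. src e \<in> V \<and> tgt e \<in> V"
    and aV: "a \<in> V" and m2: "m \<ge> 2" and p: "is_walk src tgt E a p b"
    and Sdef: "S = {e\<in>E. \<not> int m dvd net p e}"
    and small: "ereal (real (card S)) < girth src tgt E"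
  shows "\<exists>q. is_walk src tgt E a q b \<and> (\<forall>e\<in>E. int m dvd (net q e - net p e)) \<and> length q \<le> card S"
proof -
  have SE: "S \<subseteq> E" using Sdef by auto
  have finS: "finite S" using finite_subset[OF SE finE] .
  have lenS: "length c \<le> card S" if "is_walk src tgt S u c w" "distinct (map fst c)" for c u w
  proof -
    have "length c = card (set (map fst c))" using that(2) by (metis distinct_card length_map)
    also have "\<dots> \<le> card S" using walk_edges[OF that(1)] finS by (intro card_mono) auto
    finally show ?thesis .
  qed
  have acyc: "\<nexists>c. is_cycle src tgt S c"
  proof
    assume "\<exists>c. is_cycle src tgt S c"
    then obtain c where c: "is_cycle src tgt S c" by blast
    have "length c \<le> card S" using c lenS unfolding is_cycle_def by blast
    then have "girth src tgt E \<le> ereal (real (card S))"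
      using girth_le[OF cycle_mono[OF c SE]] by (meson ereal_less_eq(3) of_nat_le_iff order_trans)
    then show False using small by simp
  qed
  have bd: "\<forall>v. bdy E src tgt (net p) v = (if v = a then 1 else 0) - (if v = b then 1 else 0)"
    using bdy_net[OF finE subset_refl p] by blast
  obtain q where q: "is_walk src tgt S a q b" "distinct (map fst q)" "\<forall>e\<in>E. int m dvd (net q e - net p e)"
    using forest_exist[OF finV finE ends aV m2 Sdef acyc bd] by blast
  show ?thesis using walk_mono[OF q(1) SE] q(3) lenS[OF q(1,2)] by blast
qed

lemma net_pr: "net (pr ds) e = int (length (filter (\<lambda>d. fst (fst d) = e \<and> snd d) ds)) - int (length (filter (\<lambda>d. fst (fst d) = e \<and> \<not> snd d) ds))"
  by (induction ds) (auto simp: pr_def)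

theorem mainTheorem3:
  fixes V :: "'v set" and E :: "'e set" and src tgt :: "'e \<Rightarrow> 'v"
    and m N :: nat and T0 :: "'e set" and x y :: "'v \<times> ('e \<Rightarrow> int)"
  assumes "m \<ge> 3"
    and "is_graph V E src tgt"
    and "connected_on src tgt V E"
    and "two_connected V E src tgt"
    and "\<forall>e\<in>E. N_edge V E src tgt e = N"
    and "spanning_tree V E src tgt T0"
    and "x \<in> cov_V V E T0 m" and "y \<in> cov_V V E T0 m"
  shows "(ereal (dQ V E src tgt T0 m x y) < girth src tgt E
            \<longleftrightarrow> ereal (real (cov_dist E src tgt T0 m x y)) < girth src tgt E)
       \<and> (ereal (real (cov_dist E src tgt T0 m x y)) < girth src tgt E
            \<longrightarrow> dQ V E src tgt T0 m x y = real (cov_dist E src tgt T0 m x y))"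
proof -
  obtain a kx where x: "x = (a, kx)" by (cases x)
  obtain b ky where y: "y = (b, ky)" by (cases y)
  have finV: "finite V" and finE: "finite E" and ends: "\<forall>e\<in>E. src e \<in> V \<and> tgt e \<in> V"
    using assms(2) unfolding is_graph_def by auto
  have T0E: "T0 \<subseteq> E" and connT0: "connected_on src tgt V T0" and acycT0: "\<nexists>c. is_cycle src tgt T0 c"
    using assms(6) unfolding spanning_tree_def by auto
  have aV: "a \<in> V" and kx: "kx \<in> cloud_group E T0 m" using assms(7) x by (auto simp: cov_V_def)
  have bV: "b \<in> V" and ky: "ky \<in> cloud_group E T0 m" using assms(8) y by (auto simp: cov_V_def)
  have m0: "m > 0" and m2: "m \<ge> 2" using assms(1) by auto
  let ?W = "is_walk (cov_src src) (cov_tgt tgt T0 m) (cov_E E T0 m)"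
  define D where "D = cov_dist E src tgt T0 m x y"
  have ex: "\<exists>ds. ?W x ds y" using cover_conn[OF m0 finE T0E connT0 ends aV bV kx ky] x y by simp
  have exl: "\<exists>ds. ?W x ds y \<and> length ds = D"
    unfolding D_def cov_dist_def graph_dist_def
    using LeastI_ex[of "\<lambda>n. \<exists>ds. ?W x ds y \<and> length ds = n"] ex by blast
  define \<gamma> where "\<gamma> = geodesic E src tgt T0 m x y"
  have \<gamma>: "?W x \<gamma> y \<and> length \<gamma> = D"
    unfolding \<gamma>_def geodesic_def D_def[symmetric] by (rule someI_ex) (rule exl)
  define p where "p = pr \<gamma>"
  have pw: "is_walk src tgt E a p b" and pcl: "ky = cl T0 m kx p"
  proof -
    have "?W (a, kx) \<gamma> y" using \<gamma> x by simp
    from cover_proj[OF m0 this kx] show "is_walk src tgt E a p b" "ky = cl T0 m kx p" using y by (auto simp: p_def)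
  qed
  have lenp: "length p = D" using \<gamma> by (simp add: p_def pr_def)
  define M where "M = (\<lambda>e. min (nat \<bar>net p e\<bar> mod m) (m - nat \<bar>net p e\<bar> mod m))"
  have phi: "phi E src tgt T0 m e x y = nat \<bar>net p e\<bar> mod m" for e
    unfolding phi_def Let_def \<gamma>_def[symmetric] p_def net_pr by simp
  have Ncard: "card {T. spanning_tree V E src tgt T \<and> e \<notin> T} \<noteq> 0" if eE: "e \<in> E" for e
  proof (cases "\<exists>e1\<in>E. e1 \<notin> T0")
    case True
    then obtain e1 where e1: "e1 \<in> E" "e1 \<notin> T0" by blast
    have fin: "finite {T. spanning_tree V E src tgt T \<and> e1 \<notin> T}"
      by (rule finite_subset[of _ "Pow E"]) (use finE in \<open>auto simp: spanning_tree_def\<close>)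
    have "T0 \<in> {T. spanning_tree V E src tgt T \<and> e1 \<notin> T}" using assms(6) e1 by simp
    then have "N_edge V E src tgt e1 \<noteq> 0" unfolding N_edge_def using fin by auto
    then have "N \<noteq> 0" using assms(5) e1 by auto
    then show ?thesis using assms(5) eE unfolding N_edge_def by auto
  next
    case False
    then have ET0: "E \<subseteq> T0" by blast
    have "connected_on src tgt V (E - {e})" using assms(4) eE unfolding two_connected_def by blast
    then obtain w where "is_walk src tgt (E - {e}) (tgt e) w (src e)"
      using ends eE unfolding connected_on_def by blast
    from walk_path[OF this] obtain P where P: "is_walk src tgt (E - {e}) (tgt e) P (src e)" "distinct (map (dstart src tgt) P @ [src e])"
      by blast
    have "is_cycle src tgt T0 ((e, True) # P)"
      unfolding is_cycle_def
    proof (intro conjI)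
      show "(e, True) # P \<noteq> []" by simp
      show "is_walk src tgt T0 (dstart src tgt (hd ((e, True) # P))) ((e, True) # P) (dstart src tgt (hd ((e, True) # P)))"
        using walk_mono[OF P(1), of T0] ET0 eE by (auto simp: dstart_def dend_def)
      show "distinct (map fst ((e, True) # P))"
        using path_distinct_edges[OF P] walk_edges[OF P(1)] by auto
      show "distinct (map (dstart src tgt) ((e, True) # P))" using P(2) by (auto simp: dstart_def)
    qed
    then show ?thesis using acycT0 by blast
  qed
  have dQ: "dQ V E src tgt T0 m x y = (\<Sum>e\<in>E. real (M e))"
    unfolding dQ_def
  proof (rule sum.cong[OF refl])
    fix e assume eE: "e \<in> E"
    have pm: "min (phi E src tgt T0 m e x y) (m - phi E src tgt T0 m e x y) = M e"
      unfolding phi M_def by (rule refl)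
    have "(\<Sum>T\<in>{T. spanning_tree V E src tgt T \<and> e \<notin> T}.
        1 / real (N_edge V E src tgt e) * real (min (phi E src tgt T0 m e x y) (m - phi E src tgt T0 m e x y)))
      = real (card {T. spanning_tree V E src tgt T \<and> e \<notin> T}) * (1 / real (N_edge V E src tgt e) * real (M e))"
      unfolding pm by (rule sum_constant)
    also have "\<dots> = real (M e)" using Ncard[OF eE] unfolding N_edge_def by simp
    finally show "(\<Sum>T\<in>{T. spanning_tree V E src tgt T \<and> e \<notin> T}.
        1 / real (N_edge V E src tgt e) * real (min (phi E src tgt T0 m e x y) (m - phi E src tgt T0 m e x y)))
      = real (M e)" .
  qed
  have F1: "(\<Sum>e\<in>E. M e) \<le> D"
  proof -
    have "(\<Sum>e\<in>E. int (M e)) \<le> (\<Sum>e\<in>E. \<bar>net p e\<bar>)"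
    proof (rule sum_mono)
      fix e
      have "nat \<bar>net p e\<bar> mod m \<le> nat \<bar>net p e\<bar>" by (rule mod_less_eq_dividend)
      then have "M e \<le> nat \<bar>net p e\<bar>" unfolding M_def by linarith
      then show "int (M e) \<le> \<bar>net p e\<bar>" by linarith
    qed
    also have "\<dots> \<le> int (length p)" using sum_abs_net[OF finE subset_refl pw] .
    finally have "(\<Sum>e\<in>E. int (M e)) \<le> int (length p)" .
    moreover have "int (\<Sum>e\<in>E. M e) = (\<Sum>e\<in>E. int (M e))" by (rule of_nat_sum)
    ultimately show ?thesis using lenp by linarith
  qed
  define S where "S = {e\<in>E. \<not> int m dvd net p e}"
  have cardS: "card S \<le> (\<Sum>e\<in>E. M e)"
  proof -
    have M1: "1 \<le> M e" if "e \<in> S" for e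
    proof -
      have "nat \<bar>net p e\<bar> mod m \<noteq> 0"
      proof
        assume "nat \<bar>net p e\<bar> mod m = 0"
        then have "m dvd nat \<bar>net p e\<bar>" by auto
        then have "int m dvd \<bar>net p e\<bar>" by (metis int_dvd_int_iff abs_ge_zero int_nat_eq)
        then show False using that by (simp add: S_def)
      qed
      moreover have "nat \<bar>net p e\<bar> mod m < m" using m0 by simp
      ultimately show ?thesis unfolding M_def by simp
    qed
    have "card S = (\<Sum>e\<in>S. 1)" by simp
    also have "\<dots> \<le> (\<Sum>e\<in>S. M e)" using M1 by (rule sum_mono)
    also have "\<dots> \<le> (\<Sum>e\<in>E. M e)" by (rule sum_mono2[OF finE]) (auto simp: S_def)
    finally show ?thesis .
  qed
  have K: "D \<le> (\<Sum>e\<in>E. M e)" if small: "ereal (real (\<Sum>e\<in>E. M e)) < girth src tgt E"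
  proof -
    have "ereal (real (card S)) < girth src tgt E"
      using cardS small by (meson ereal_less_eq(3) of_nat_le_iff order.strict_trans1)
    then obtain q where q: "is_walk src tgt E a q b" "\<forall>e\<in>E. int m dvd (net q e - net p e)" "length q \<le> card S"
      using key[OF finV finE ends aV m2 pw S_def] by blast
    obtain ds z where ds: "?W (a, kx) ds z" "pr ds = q" using cover_lift[OF m0 q(1) kx] by blast
    have pz: "is_walk src tgt E a q (fst z)" "snd z = cl T0 m kx q"
      using cover_proj[OF m0 ds(1) kx] ds(2) by auto
    have fz: "fst z = b" using walk_det[OF pz(1) q(1)] .
    have "cl T0 m kx q = cl T0 m kx p"
    proof (rule ext)
      fix e
      show "cl T0 m kx q e = cl T0 m kx p e"
      proof (cases "e \<in> E")
        case True
        then have "int m dvd (kx e + net q e) - (kx e + net p e)" using q(2) by simp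
        then show ?thesis unfolding cl_def using True by (auto simp: mod_eq_dvd_iff)
      next
        case False
        then show ?thesis unfolding cl_def using net_notin[OF q(1) False] net_notin[OF pw False] by simp
      qed
    qed
    then have "z = y" using fz pz(2) pcl y by (metis prod.collapse)
    moreover have "length ds = length q" using ds(2) by (auto simp: pr_def)
    ultimately have "?W x ds y \<and> length ds = length q" using ds x by simp
    then have "D \<le> length q" unfolding D_def cov_dist_def graph_dist_def by (metis (mono_tags) Least_le)
    then show ?thesis using q(3) cardS by simp
  qed
  have rs: "real (\<Sum>e\<in>E. M e) = (\<Sum>e\<in>E. real (M e))" by (rule of_nat_sum)
  have F1r: "(\<Sum>e\<in>E. real (M e)) \<le> real D" using F1 unfolding rs[symmetric] by linarith
  have Kr: "real D \<le> (\<Sum>e\<in>E. real (M e))" if "ereal (\<Sum>e\<in>E. real (M e)) < girth src tgt E"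
    using K[OF that[unfolded rs[symmetric]]] unfolding rs[symmetric] by linarith
  show ?thesis
    unfolding dQ D_def[symmetric]
  proof (intro conjI impI iffI)
    assume "ereal (\<Sum>e\<in>E. real (M e)) < girth src tgt E"
    then show "ereal (real D) < girth src tgt E" using Kr by (meson ereal_less_eq(3) order.strict_trans1)
  next
    assume "ereal (real D) < girth src tgt E"
    then show "ereal (\<Sum>e\<in>E. real (M e)) < girth src tgt E" using F1r by (meson ereal_less_eq(3) order.strict_trans1)
  next
    assume h: "ereal (real D) < girth src tgt E"
    then have "ereal (\<Sum>e\<in>E. real (M e)) < girth src tgt E" using F1r by (meson ereal_less_eq(3) order.strict_trans1)
    then show "(\<Sum>e\<in>E. real (M e)) = real D" using Kr F1r by linarith
  qed
qed

end
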